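(* Let $d\ge 2$ and $n\ge 2d$ be integers. Suppose $\mathcal{H}\subseteq\binom{[n]}{d}$ is an intersecting family (any two members intersect) with $|\mathcal{H}|\ge 6n^{d-2}$. Then there exist an element $\ell\in[n]$ and sets $A_1,\dots,A_{d+1}\in\mathcal{H}$ such that (1) $\ell\in A$ for all $A\in\mathcal{H}$, and (2) the sets $A_1\setminus\{\ell\},\dots,A_{d+1}\setminus\{\ell\}$ are pairwise disjoint.
   Context: $\binom{[n]}{d}$ denotes the family of all $d$-element subsets of $[n]$. *)

theory Defs
  imports Main
begin

end

theory Submission
  imports Defs
begin

definition KK :: "nat \<Rightarrow> nat \<Rightarrow> nat set \<Rightarrow> nat set set" where
  "KK n d S = {B. B \<subseteq> {1..n} \<and> card B = d \<and> S \<subseteq> B}"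

lemma count_KK:
  assumes "finite S" "card S = k"
  shows "card (KK n d S) \<le> (n - k) choose (d - k)"
proof (cases "S \<subseteq> {1..n}")
  case False
  then have "KK n d S = {}" unfolding KK_def by auto
  then show ?thesis by simp
next
  case True
  define F where "F = {T. T \<subseteq> {1..n} - S \<and> card T = d - k}"
  have cF: "card F = (n - k) choose (d - k)"
    unfolding F_def using n_subsets[of "{1..n} - S" "d - k"] True assms
    by (simp add: card_Diff_subset)
  have inj: "inj_on (\<lambda>B. B - S) (KK n d S)"
    unfolding KK_def inj_on_def by blast
  have img: "(\<lambda>B. B - S) ` KK n d S \<subseteq> F"
  proof
    fix T assume "T \<in> (\<lambda>B. B - S) ` KK n d S"
    then obtain B where B: "B \<subseteq> {1..n}" "card B = d" "S \<subseteq> B" "T = B - S"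
      unfolding KK_def by auto
    have "finite B" using B(1) finite_subset by blast
    then have "card T = d - k" using B assms by (simp add: card_Diff_subset)
    then show "T \<in> F" unfolding F_def using B by auto
  qed
  have "finite F" unfolding F_def by auto
  from card_inj_on_le[OF inj img this] cF show ?thesis by simp
qed

lemma card_UN_bound:
  assumes "finite I" "\<And>i. i \<in> I \<Longrightarrow> card (F i) \<le> b"
  shows "card (\<Union>i\<in>I. F i) \<le> card I * b"
proof -
  have "card (\<Union>i\<in>I. F i) \<le> (\<Sum>i\<in>I. card (F i))" using card_UN_le[OF assms(1)] .
  also have "\<dots> \<le> card I * b" using sum_bounded_above[of I "\<lambda>i. card (F i)" b] assms(2) by simp
  finally show ?thesis .
qed

lemma arith_main:
  fixes c d n :: nat
  assumes "c \<le> 6 * fact (d-2)" "d \<ge> 2" "n \<ge> 2*d" "d \<ge> 3 \<or> c < 6"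
  shows "c * ((n-2) choose (d-2)) < 6 * n^(d-2)"
proof (cases "d = 2")
  case True
  then show ?thesis using assms by simp
next
  case False
  then have d3: "d \<ge> 3" using assms by simp
  have "c * ((n-2) choose (d-2)) \<le> 6 * fact (d-2) * ((n-2) choose (d-2))"
    using assms(1) by simp
  also have "\<dots> = 6 * (((n-2) choose (d-2)) * fact (d-2))" by simp
  also have "\<dots> \<le> 6 * (n-2)^(d-2)" using binomial_fact_pow[of "n-2" "d-2"] by simp
  also have "\<dots> < 6 * n^(d-2)"
  proof -
    have "(n-2)^(d-2) < n^(d-2)"
      using d3 assms(3) by (intro power_strict_mono) auto
    then show ?thesis by simp
  qed
  finally show ?thesis .
qed

lemma fact_ge_sq: "m \<ge> 2 \<Longrightarrow> m * (m - 1) \<le> fact m"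
proof -
  assume "m \<ge> 2"
  then obtain k where k: "m = Suc k" by (cases m) auto
  have "k \<le> fact k" using fact_ge_self by blast
  then have "m * k \<le> m * fact k" by simp
  then show ?thesis using k by (simp add: fact_Suc)
qed

theorem lemma5p3:
  fixes d n :: nat and H :: "nat set set"
  assumes "d \<ge> 2" and "n \<ge> 2 * d"
    and "\<forall>A\<in>H. A \<subseteq> {1..n} \<and> card A = d"
    and "\<forall>A\<in>H. \<forall>B\<in>H. A \<inter> B \<noteq> {}"
    and "card H \<ge> 6 * n ^ (d - 2)"
  shows "\<exists>l \<in> {1..n}. \<exists>A :: nat \<Rightarrow> nat set.
           (\<forall>B\<in>H. l \<in> B) \<and>
           (\<forall>i\<in>{1..d+1}. A i \<in> H) \<and>
           (\<forall>i\<in>{1..d+1}. \<forall>j\<in>{1..d+1}. i \<noteq> j \<longrightarrow>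
               (A i - {l}) \<inter> (A j - {l}) = {})"
proof -
  note A3 = assms(3)
  have finH: "finite H"
  proof -
    have "H \<subseteq> Pow {1..n}" using A3 by auto
    then show ?thesis using finite_subset by blast
  qed
  have KKsub: "\<And>B S. B \<in> H \<Longrightarrow> S \<subseteq> B \<Longrightarrow> B \<in> KK n d S"
    using A3 unfolding KK_def by auto
  have cardH: "\<And>B. B \<in> H \<Longrightarrow> card B = d" using A3 by auto
  have finB: "\<And>B. B \<in> H \<Longrightarrow> finite B"
    using A3 finite_subset[of _ "{1..n}"] by blast
  have fin_any: "\<And>X. X \<subseteq> Pow {1..n} \<Longrightarrow> finite X"
    using finite_subset by blast
  define g2 where "g2 = (n-2) choose (d-2)"
  have K2: "\<And>x y. x \<noteq> y \<Longrightarrow> card (KK n d {x,y}) \<le> g2"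
  proof -
    fix x y :: nat assume "x \<noteq> y"
    then show "card (KK n d {x,y}) \<le> g2" unfolding g2_def using count_KK[of "{x,y}" 2 n d] by simp
  qed
  have Hne: "H \<noteq> {}" using assms(5) assms(1,2) by (cases "H = {}") auto
  then obtain A0 where A0: "A0 \<in> H" by auto
  have star: "\<exists>l. \<forall>B\<in>H. l \<in> B"
  proof (rule ccontr)
    assume ns: "\<not> (\<exists>l. \<forall>B\<in>H. l \<in> B)"
    then have "\<forall>x. \<exists>C. C \<in> H \<and> x \<notin> C" by blast
    then obtain C where C: "\<And>x. C x \<in> H" "\<And>x. x \<notin> C x" by metis
    have small: "card H < 6 * n^(d-2)"
    proof (cases "d = 2 \<or> d \<ge> 5")
      case True
      have sub: "H \<subseteq> (\<Union>x\<in>A0. \<Union>y\<in>C x. KK n d {x,y})"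
      proof
        fix B assume B: "B \<in> H"
        obtain x where x: "x \<in> A0" "x \<in> B" using assms(4) A0 B by blast
        obtain y where y: "y \<in> C x" "y \<in> B" using assms(4) C(1) B by blast
        show "B \<in> (\<Union>x\<in>A0. \<Union>y\<in>C x. KK n d {x,y})"
          using x y KKsub[OF B, of "{x,y}"] by blast
      qed
      have "card H \<le> card (\<Union>x\<in>A0. \<Union>y\<in>C x. KK n d {x,y})"
        by (rule card_mono) (use sub in \<open>auto intro!: fin_any simp: KK_def\<close>)
      also have "\<dots> \<le> card A0 * (d * g2)"
      proof (rule card_UN_bound)
        show "finite A0" using finB A0 .
        fix x assume "x \<in> A0"
        show "card (\<Union>y\<in>C x. KK n d {x,y}) \<le> d * g2"
        proof -
          have "card (\<Union>y\<in>C x. KK n d {x,y}) \<le> card (C x) * g2"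
            by (rule card_UN_bound) (use finB C in \<open>auto intro!: K2\<close>)
          then show ?thesis using cardH C by simp
        qed
      qed
      also have "\<dots> = (d*d) * g2" using cardH A0 by simp
      also have "\<dots> < 6 * n^(d-2)" unfolding g2_def
      proof (rule arith_main)
        show "d*d \<le> 6 * fact (d-2)"
        proof (cases "d = 2")
          case True then show ?thesis by simp
        next
          case False
          then have d5: "d \<ge> 5" using \<open>d = 2 \<or> d \<ge> 5\<close> by simp
          have "(d-2)*(d-3) \<le> fact (d-2)" proof -
            have e1: "d-2-1 = d-3" by simp
            have "(d-2)*(d-2-1) \<le> fact (d-2)" by (rule fact_ge_sq) (use d5 in simp)
            then show ?thesis by (simp only: e1)
          qed
          moreover have "d*d \<le> 6*((d-2)*(d-3))"
          proof -
            define e where "e = d - 5"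
            have e: "d = e + 5" using d5 unfolding e_def by simp
            show ?thesis unfolding e by (simp add: algebra_simps)
          qed
          ultimately show ?thesis by linarith
        qed
      qed (use assms True in auto)
      finally show ?thesis .
    next
      case False
      then have d34: "d = 3 \<or> d = 4" using assms(1) by auto
      show ?thesis
      proof (cases "\<exists>a b. \<forall>B\<in>H. a \<in> B \<or> b \<in> B")
        case True
        then obtain a b where ab: "\<forall>B\<in>H. a \<in> B \<or> b \<in> B" by blast
        obtain Ca where Ca: "Ca \<in> H" "a \<notin> Ca" using C by blast
        obtain Cb where Cb: "Cb \<in> H" "b \<notin> Cb" using C by blast
        have bCa: "b \<in> Ca" using ab Ca by blast
        have aCb: "a \<in> Cb" using ab Cb by blast
        have anb: "a \<noteq> b" using bCa Ca by auto
        have sub: "H \<subseteq> KK n d {a,b} \<union> (\<Union>y\<in>Ca-{b}. KK n d {a,y}) \<union> (\<Union>y\<in>Cb-{a}. KK n d {b,y})"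
        proof
          fix B assume B: "B \<in> H"
          show "B \<in> KK n d {a,b} \<union> (\<Union>y\<in>Ca-{b}. KK n d {a,y}) \<union> (\<Union>y\<in>Cb-{a}. KK n d {b,y})"
          proof (cases "a \<in> B \<and> b \<in> B")
            case True then show ?thesis using KKsub[OF B, of "{a,b}"] by blast
          next
            case False
            then have "(a \<in> B \<and> b \<notin> B) \<or> (b \<in> B \<and> a \<notin> B)" using ab B by blast
            then show ?thesis
            proof
              assume h: "a \<in> B \<and> b \<notin> B"
              obtain y where y: "y \<in> Ca" "y \<in> B" using assms(4) Ca B by blast
              then show ?thesis using h KKsub[OF B, of "{a,y}"] by blast
            next
              assume h: "b \<in> B \<and> a \<notin> B"
              obtain y where y: "y \<in> Cb" "y \<in> B" using assms(4) Cb B by blast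
              then show ?thesis using h KKsub[OF B, of "{b,y}"] by blast
            qed
          qed
        qed
        have c1: "card (\<Union>y\<in>Ca-{b}. KK n d {a,y}) \<le> (d-1) * g2"
        proof -
          have "card (\<Union>y\<in>Ca-{b}. KK n d {a,y}) \<le> card (Ca-{b}) * g2"
            by (rule card_UN_bound) (use finB Ca in \<open>auto intro!: K2\<close>)
          then show ?thesis using cardH Ca bCa by simp
        qed
        have c2: "card (\<Union>y\<in>Cb-{a}. KK n d {b,y}) \<le> (d-1) * g2"
        proof -
          have "card (\<Union>y\<in>Cb-{a}. KK n d {b,y}) \<le> card (Cb-{a}) * g2"
            by (rule card_UN_bound) (use finB Cb in \<open>auto intro!: K2\<close>)
          then show ?thesis using cardH Cb aCb by simp
        qed
        have fK: "\<And>S. finite (KK n d S)" unfolding KK_def by auto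
        have "card H \<le> card (KK n d {a,b} \<union> (\<Union>y\<in>Ca-{b}. KK n d {a,y}) \<union> (\<Union>y\<in>Cb-{a}. KK n d {b,y}))"
          by (rule card_mono) (use sub in \<open>auto intro!: fin_any simp: KK_def\<close>)
        also have "\<dots> \<le> card (KK n d {a,b}) + card (\<Union>y\<in>Ca-{b}. KK n d {a,y}) + card (\<Union>y\<in>Cb-{a}. KK n d {b,y})"
          by (meson card_Un_le add_right_mono le_trans)
        also have "\<dots> \<le> g2 + (d-1)*g2 + (d-1)*g2" using K2[OF anb] c1 c2 by linarith
        also have "\<dots> = (2*d-1) * g2" using assms(1) by (simp add: algebra_simps)
        also have "\<dots> < 6 * n^(d-2)" unfolding g2_def
          by (rule arith_main) (use assms d34 in auto)
        finally show ?thesis .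
      next
        case False
        then have "\<forall>a b. \<exists>E. E \<in> H \<and> a \<notin> E \<and> b \<notin> E" by blast
        then obtain E where E: "\<And>a b. E a b \<in> H" "\<And>a b. a \<notin> E a b" "\<And>a b. b \<notin> E a b" by metis
        define g3 where "g3 = (n-3) choose (d-3)"
        have K3: "\<And>x y z. x \<noteq> y \<Longrightarrow> z \<noteq> x \<Longrightarrow> z \<noteq> y \<Longrightarrow> card (KK n d {x,y,z}) \<le> g3"
        proof -
          fix x y z :: nat assume "x \<noteq> y" "z \<noteq> x" "z \<noteq> y"
          then show "card (KK n d {x,y,z}) \<le> g3" unfolding g3_def using count_KK[of "{x,y,z}" 3 n d] by simp
        qed
        have sub: "H \<subseteq> (\<Union>x\<in>A0. \<Union>y\<in>C x. \<Union>z\<in>E x y. KK n d {x,y,z})"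
        proof
          fix B assume B: "B \<in> H"
          obtain x where x: "x \<in> A0" "x \<in> B" using assms(4) A0 B by blast
          obtain y where y: "y \<in> C x" "y \<in> B" using assms(4) C(1) B by blast
          obtain z where z: "z \<in> E x y" "z \<in> B" using assms(4) E(1) B by blast
          show "B \<in> (\<Union>x\<in>A0. \<Union>y\<in>C x. \<Union>z\<in>E x y. KK n d {x,y,z})"
            using x y z KKsub[OF B, of "{x,y,z}"] by blast
        qed
        have "card H \<le> card (\<Union>x\<in>A0. \<Union>y\<in>C x. \<Union>z\<in>E x y. KK n d {x,y,z})"
          by (rule card_mono) (use sub in \<open>auto intro!: fin_any simp: KK_def\<close>)
        also have "\<dots> \<le> card A0 * (d * (d * g3))"
        proof (rule card_UN_bound)
          show "finite A0" using finB A0 .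
          fix x assume "x \<in> A0"
          have "card (\<Union>y\<in>C x. \<Union>z\<in>E x y. KK n d {x,y,z}) \<le> card (C x) * (d * g3)"
          proof (rule card_UN_bound)
            show "finite (C x)" using finB C by blast
            fix y assume y: "y \<in> C x"
            have "card (\<Union>z\<in>E x y. KK n d {x,y,z}) \<le> card (E x y) * g3"
              by (rule card_UN_bound) (use finB E C y in \<open>auto intro!: K3\<close>)
            then show "card (\<Union>z\<in>E x y. KK n d {x,y,z}) \<le> d * g3" using cardH E by simp
          qed
          then show "card (\<Union>y\<in>C x. \<Union>z\<in>E x y. KK n d {x,y,z}) \<le> d * (d * g3)"
            using cardH C by simp
        qed
        also have "\<dots> = d*d*d*g3" using cardH A0 by simp
        also have "\<dots> < 6 * n^(d-2)"
          using d34
        proof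
          assume "d = 3" then show ?thesis unfolding g3_def using assms(2) by simp
        next
          assume d4: "d = 4"
          have n8: "n \<ge> 8" using assms(2) d4 by simp
          have a1: "n*8 \<le> n*n" using n8 by simp
          have a2: "n \<ge> 12 \<Longrightarrow> n*12 \<le> n*n" by simp
          have "64 * (n-3) < 6 * n^2"
          proof (cases "n \<ge> 12")
            case True then have "n*12 \<le> n*n" by (rule a2)
            then have "64*(n-3) < 6*(n*n)" using True by linarith
            then show ?thesis by (simp only: power2_eq_square)
          next
            case False then have "64*(n-3) < 6*(n*n)" using a1 n8 by linarith
            then show ?thesis by (simp only: power2_eq_square)
          qed
          then show ?thesis unfolding g3_def using d4 by simp
        qed
        finally show ?thesis .
      qed
    qed
    then show False using assms(5) by simp
  qed
  then obtain l where l: "\<forall>B\<in>H. l \<in> B" by blast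
  have lin: "l \<in> {1..n}" using l A0 A3 by blast
  define P where "P = (\<lambda>M. M \<subseteq> H \<and> (\<forall>A\<in>M. \<forall>B\<in>M. A \<noteq> B \<longrightarrow> (A-{l}) \<inter> (B-{l}) = {}))"
  have "\<exists>M. P M \<and> (\<forall>M'. P M' \<longrightarrow> card M' \<le> card M)"
  proof (rule ex_has_greatest_nat[of P "{}" card "card H + 1"])
    show "P {}" unfolding P_def by simp
    show "\<forall>y. P y \<longrightarrow> card y < card H + 1"
      unfolding P_def using card_mono[OF finH] by (simp add: less_Suc_eq_le)
  qed
  then obtain M where M: "P M" "\<And>M'. P M' \<Longrightarrow> card M' \<le> card M" by blast
  have finM: "finite M" using M(1) finH finite_subset unfolding P_def by blast
  show ?thesis
  proof (cases "card M \<ge> d + 1")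
    case True
    obtain h where h: "bij_betw h {1..card M} M" using ex_bij_betw_nat_finite_1[OF finM] by blast
    have "(\<forall>i\<in>{1..d+1}. h i \<in> H) \<and>
           (\<forall>i\<in>{1..d+1}. \<forall>j\<in>{1..d+1}. i \<noteq> j \<longrightarrow> (h i - {l}) \<inter> (h j - {l}) = {})"
    proof (intro conjI ballI impI)
      fix i assume "i \<in> {1..d+1}"
      then have "i \<in> {1..card M}" using True by auto
      then show "h i \<in> H" using h M(1) unfolding P_def bij_betw_def by blast
    next
      fix i j assume i: "i \<in> {1..d+1}" and j: "j \<in> {1..d+1}" and ij: "i \<noteq> j"
      then have i': "i \<in> {1..card M}" and j': "j \<in> {1..card M}" using True by auto
      then have "h i \<noteq> h j" using h ij unfolding bij_betw_def inj_on_def by blast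
      moreover have "h i \<in> M" "h j \<in> M" using h i' j' unfolding bij_betw_def by blast+
      ultimately show "(h i - {l}) \<inter> (h j - {l}) = {}" using M(1) unfolding P_def by blast
    qed
    then show ?thesis using lin l by blast
  next
    case False
    define U where "U = (\<Union>A\<in>M. A - {l})"
    have cU: "card U \<le> d * (d-1)"
    proof -
      have "card U \<le> card M * (d-1)" unfolding U_def
        by (rule card_UN_bound) (use finM M(1) cardH l finB in \<open>auto simp: P_def\<close>)
      also have "\<dots> \<le> d * (d-1)" using False by simp
      finally show ?thesis .
    qed
    have finU: "finite U" unfolding U_def
      by (rule finite_UN_I[OF finM]) (use M(1) finB in \<open>auto simp: P_def\<close>)
    have sub: "H \<subseteq> (\<Union>y\<in>U. KK n d {l,y})"
    proof
      fix B assume B: "B \<in> H"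
      have "\<exists>A\<in>M. (B-{l}) \<inter> (A-{l}) \<noteq> {}"
      proof (rule ccontr)
        assume nn: "\<not> (\<exists>A\<in>M. (B-{l}) \<inter> (A-{l}) \<noteq> {})"
        have "B - {l} \<noteq> {}"
        proof
          assume "B - {l} = {}"
          then have "B \<subseteq> {l}" by blast
          then have "card B \<le> 1" using card_mono[of "{l}" B] by simp
          then show False using cardH[OF B] assms(1) by simp
        qed
        then have BM: "B \<notin> M" using nn by blast
        have "P (insert B M)" using M(1) nn B unfolding P_def by blast
        then have "card (insert B M) \<le> card M" using M(2) by blast
        then show False using BM finM by simp
      qed
      then obtain A y where "A \<in> M" "y \<in> B" "y \<in> A" "y \<noteq> l" by blast
      then show "B \<in> (\<Union>y\<in>U. KK n d {l,y})"
        unfolding U_def using KKsub[OF B, of "{l,y}"] l B by blast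
    qed
    have "card H \<le> card (\<Union>y\<in>U. KK n d {l,y})"
      by (rule card_mono) (use sub in \<open>auto intro!: fin_any simp: KK_def\<close>)
    also have "\<dots> \<le> card U * g2"
      by (rule card_UN_bound) (use finU in \<open>auto intro!: K2 simp: U_def\<close>)
    also have "\<dots> \<le> (d*(d-1)) * g2" using cU by simp
    also have "\<dots> < 6 * n^(d-2)" unfolding g2_def
    proof (rule arith_main)
      show "d*(d-1) \<le> 6 * fact (d-2)"
      proof (cases "d \<le> 3")
        case True then have "d = 2 \<or> d = 3" using assms(1) by auto
        then show ?thesis by auto
      next
        case False
        have "(d-2)*(d-3) \<le> fact (d-2)" proof -
            have e1: "d-2-1 = d-3" by simp
            have "(d-2)*(d-2-1) \<le> fact (d-2)" by (rule fact_ge_sq) (use False in simp)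
            then show ?thesis by (simp only: e1)
          qed
        moreover have "d*(d-1) \<le> 6*((d-2)*(d-3))"
        proof -
          define e where "e = d - 4"
          have e: "d = e + 4" using False unfolding e_def by simp
          show ?thesis unfolding e by (simp add: algebra_simps)
        qed
        ultimately show ?thesis by linarith
      qed
    next
      show "3 \<le> d \<or> d*(d-1) < 6"
      proof (cases "d = 2")
        case True then show ?thesis by simp
      qed (use assms in auto)
    qed (use assms in auto)
    finally show ?thesis using assms(5) by simp
  qed
qed

end
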